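(* Consider the Truthful Interval Covering setting with $n$ agents and unit-length intervals. Let $\mathcal{M}$ be a deterministic truthful mechanism, $\mathcal{I}$ an instance and $i$ an agent such that $I_i\cap\mathcal{M}(\mathcal{I})$ has positive length. Let $I_i'$ be a unit interval such that $I_i'\cap I_i\cap \mathcal{M}(\mathcal{I})$ has positive length, and let $\mathcal{I}'=(I_i',\mathcal{I}_{-i})$. Then $I_i'\cap \mathcal{M}(\mathcal{I}')$ has positive length.
   Context: There are $n$ agents; agent $i$ has an interval $I_i=[s_i,s_i+1]$ of length $1$; an instance is $\mathcal{I}=(I_1,\dots,I_n)$ and $\mathcal{I}_{-i}$ denotes the intervals of all agents other than $i$. A deterministic mechanism maps each reported instance to a unit covering interval $\mathcal{M}(\mathcal{I})$. Agent $i$'s cost is $\mathrm{cost}_i(C)=1-|I_i\cap C|$ ($|\cdot|$ = length). $\mathcal{M}$ is truthful if for every instance $\mathcal{I}$, agent $i$ and misreport $I_i'$, $\mathrm{cost}_i(\mathcal{M}(\mathcal{I}))\le\mathrm{cost}_i(\mathcal{M}(I_i',\mathcal{I}_{-i}))$. *)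

theory Defs
  imports "HOL-Analysis.Analysis"
begin

text \<open>Agents are the elements of a finite type 'a (so n = CARD('a)).
  A unit interval [s, s+1] is represented by its left endpoint s.
  An instance is a map from agents to left endpoints; a deterministic
  mechanism maps an instance to the left endpoint of the covering interval.\<close>

definition unit_iv :: "real \<Rightarrow> real set" where
  "unit_iv s = {s..s+1}"

definition ilen :: "real set \<Rightarrow> real" where
  "ilen A = measure lborel A"

definition cost :: "real \<Rightarrow> real \<Rightarrow> real" where
  "cost s c = 1 - ilen (unit_iv s \<inter> unit_iv c)"

definition truthful :: "(('a::finite \<Rightarrow> real) \<Rightarrow> real) \<Rightarrow> bool" where
  "truthful M \<longleftrightarrow>
     (\<forall>I i t. cost (I i) (M I) \<le> cost (I i) (M (I(i := t))))"

end

theory Submission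
  imports Defs
begin

lemma iv_int: "unit_iv a \<inter> unit_iv b = {max a b .. min a b + 1}"
  unfolding unit_iv_def by auto

lemma ilen_iv: "ilen (unit_iv a \<inter> unit_iv b) = max 0 (1 - \<bar>a - b\<bar>)"
  unfolding iv_int ilen_def by (auto simp: max_def min_def)

lemma ilen_mono3: "ilen (unit_iv a \<inter> unit_iv b \<inter> unit_iv c) \<le> ilen (unit_iv a \<inter> unit_iv c)"
  unfolding ilen_def
  by (rule measure_mono_fmeasurable) (auto simp: unit_iv_def fmeasurable_def emeasure_lborel_Icc_eq)

theorem lemma1:
  fixes M :: "('a::finite \<Rightarrow> real) \<Rightarrow> real"
    and I :: "'a \<Rightarrow> real" and i :: 'a and t :: real
  assumes "truthful M"
    and "ilen (unit_iv (I i) \<inter> unit_iv (M I)) > 0"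
    and "ilen (unit_iv t \<inter> unit_iv (I i) \<inter> unit_iv (M I)) > 0"
  shows "ilen (unit_iv t \<inter> unit_iv (M (I(i := t)))) > 0"
proof (rule ccontr)
  assume nz: "\<not> ?thesis"
  have p: "ilen (unit_iv t \<inter> unit_iv (M I)) > 0"
    using assms(3) ilen_mono3[of t "I i" "M I"] by linarith
  have "cost ((I(i := t)) i) (M (I(i := t))) \<le> cost ((I(i := t)) i) (M ((I(i := t))(i := I i)))"
    using assms(1) unfolding truthful_def by blast
  moreover have "(I(i := t))(i := I i) = I" by auto
  ultimately have "cost t (M (I(i := t))) \<le> cost t (M I)" by simp
  then show False using nz p unfolding cost_def by linarith
qed

end
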